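(* Assume (A1) differentiability, (A2) convexity, (A3) $\mu$-strong convexity of $f$, (A4) interpolation and (SS) Star Similarity with constant $\delta_*>0$ (with respect to the point $x_*$, which is the minimizer of $f$ and satisfies (A4)). If the stepsize satisfies $0<\gamma\le\frac{\mu}{2\delta_*^2}$, then the iterates of SPPM satisfy, for every $k\ge0$, $$\mathbb{E}\big[\|x_k-x_*\|^2\big]\le\left(1-\min\Big(\frac{\gamma\mu}{4},\frac12\Big)\right)^k\|x_0-x_*\|^2 .$$
   Context: Setting: $\mathcal{D}$ is a probability distribution over samples $\xi$; for each $\xi$, $f_\xi:\mathbb{R}^d\to\mathbb{R}$; $f(x)=\mathbb{E}_{\xi\sim\mathcal{D}}[f_\xi(x)]$, with $\nabla f(x)=\mathbb{E}[\nabla f_\xi(x)]$. Assumptions: (A1) $f_\xi$ differentiable for $\mathcal{D}$-a.e. $\xi$; (A2) $f_\xi$ convex for $\mathcal{D}$-a.e. $\xi$; (A3) $f(x)\ge f(y)+\langle\nabla f(y),x-y\rangle+\frac\mu2\|x-y\|^2$ for all $x,y$; (A4) (interpolation) there exists $x_*$ with $\nabla f_\xi(x_* )=0$ for $\mathcal{D}$-a.e. $\xi$; (SS) (Star Similarity) there exist a minimizer $x_*$ of $f$ and $\delta_*>0$ with $\mathbb{E}_{\xi\sim\mathcal{D}}\big[\|\nabla f_\xi(x)-\nabla f(x)-\nabla f_\xi(x_* )\|^2\big]\le\delta_*^2\|x-x_*\|^2$ for all $x\in\mathbb{R}^d$. SPPM: given $\gamma>0$, $x_0\in\mathbb{R}^d$,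 and i.i.d. $\xi_0,\xi_1,\dots\sim\mathcal{D}$, set $x_{k+1}=\arg\min_{z}\{f_{\xi_k}(z)+\frac{1}{2\gamma}\|z-x_k\|^2\}$. *)

theory Defs
  imports "HOL-Analysis.Analysis" "HOL-Probability.Probability"
begin

text \<open>Proximal step: the (unique, for convex g and gamma > 0) minimizer of
  z \<mapsto> g z + 1/(2 gamma) * norm (z - x)^2.\<close>
definition prox_step :: "real \<Rightarrow> ('a::real_normed_vector \<Rightarrow> real) \<Rightarrow> 'a \<Rightarrow> 'a" where
  "prox_step \<gamma> g x =
     (THE z. \<forall>w. g z + (norm (z - x))\<^sup>2 / (2 * \<gamma>) \<le> g w + (norm (w - x))\<^sup>2 / (2 * \<gamma>))"

fun sppm :: "real \<Rightarrow> ('b \<Rightarrow> 'a::real_normed_vector \<Rightarrow> real) \<Rightarrow> 'a \<Rightarrow> (nat \<Rightarrow> 'b) \<Rightarrow> nat \<Rightarrow> 'a" where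
  "sppm \<gamma> F x0 \<omega> 0 = x0"
| "sppm \<gamma> F x0 \<omega> (Suc k) = prox_step \<gamma> (F (\<omega> k)) (sppm \<gamma> F x0 \<omega> k)"

end

theory Submission
  imports Defs
begin


lemma grad_ineq:
  fixes g :: "'a::euclidean_space \<Rightarrow> real"
  assumes cv: "convex_on UNIV g" and d: "(g has_derivative (\<lambda>h. v \<bullet> h)) (at y)"
  shows "g z \<ge> g y + v \<bullet> (z - y)"
proof -
  define h where "h t = g (y + t *\<^sub>R (z - y))" for t :: real
  have cvh: "convex_on UNIV h"
    unfolding h_def convex_on_def
  proof (intro conjI convex_UNIV ballI allI impI)
    fix a b :: real and u w :: real assume "u \<ge> 0" "w \<ge> 0" "u + w = 1"
    have "y + (u * a + w * b) *\<^sub>R (z - y) = u *\<^sub>R (y + a *\<^sub>R (z - y)) + w *\<^sub>R (y + b *\<^sub>R (z - y))"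
      using \<open>u + w = 1\<close> by (simp add: algebra_simps flip: scaleR_add_left)
    moreover have "g (u *\<^sub>R (y + a *\<^sub>R (z - y)) + w *\<^sub>R (y + b *\<^sub>R (z - y))) \<le> u * g (y + a *\<^sub>R (z - y)) + w * g (y + b *\<^sub>R (z - y))"
    proof -
      have u: "u = 1 - w" using \<open>u+w=1\<close> by linarith
      have "g ((1 - w) *\<^sub>R (y + a *\<^sub>R (z - y)) + w *\<^sub>R (y + b *\<^sub>R (z - y))) \<le> (1 - w) * g (y + a *\<^sub>R (z - y)) + w * g (y + b *\<^sub>R (z - y))"
        by (rule convex_onD[OF cv]) (use \<open>u\<ge>0\<close> \<open>w\<ge>0\<close> u in auto)
      then show ?thesis unfolding u .
    qed
    ultimately show "g (y + (u *\<^sub>R a + w *\<^sub>R b) *\<^sub>R (z - y)) \<le> u * g (y + a *\<^sub>R (z - y)) + w * g (y + b *\<^sub>R (z - y))"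
      by simp
  qed
  have d0: "((\<lambda>t. y + t *\<^sub>R (z - y)) has_derivative (\<lambda>t. t *\<^sub>R (z - y))) (at 0)"
    by (auto intro!: derivative_eq_intros)
  have d1: "(g has_derivative (\<lambda>h. v \<bullet> h)) (at (y + 0 *\<^sub>R (z - y)))" using d by simp
  have "(h has_derivative (\<lambda>t. v \<bullet> (t *\<^sub>R (z - y)))) (at 0)"
    unfolding h_def using has_derivative_compose[OF d0 d1] by (simp add: o_def)
  hence "(h has_field_derivative (v \<bullet> (z - y))) (at 0 within UNIV)"
  proof -
    have "(\<lambda>t. v \<bullet> (t *\<^sub>R (z - y))) = (*) (v \<bullet> (z - y))" by (rule ext) simp
    thus ?thesis using \<open>(h has_derivative _) _\<close> unfolding has_field_derivative_def by simp
  qed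
  from convex_on_imp_above_tangent[OF cvh connected_UNIV _ _ this, of 1]
  have "h 1 - h 0 \<ge> v \<bullet> (z - y)" by simp
  thus ?thesis by (simp add: h_def)
qed

lemma small_t:
  fixes c b :: real
  assumes H: "\<And>t. 0 < t \<Longrightarrow> t \<le> 1 \<Longrightarrow> 0 \<le> c + t * b" and b: "b \<ge> 0"
  shows "0 \<le> c"
proof (rule ccontr)
  assume "\<not> 0 \<le> c"
  hence c: "c < 0" by simp
  define t where "t = min 1 (-c / (2 * (b + 1)))"
  have "0 < -c / (2 * (b + 1))" by (rule divide_pos_pos) (use c b in auto)
  hence t0: "0 < t" by (simp add: t_def)
  have t1: "t \<le> 1" by (simp add: t_def)
  have "t * b \<le> (-c / (2 * (b + 1))) * b" using b by (intro mult_right_mono) (auto simp: t_def)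
  also have "\<dots> = -c / 2 * (b / (b + 1))" using b by (simp add: field_simps)
  also have "\<dots> \<le> -c / 2" using b c by (intro mult_left_le) auto
  finally have "c + t * b < 0" using c by linarith
  with H[OF t0 t1] show False by linarith
qed

lemma norm_add_sq: "(norm (p + q :: 'a::real_inner))\<^sup>2 = (norm p)\<^sup>2 + 2 * (p \<bullet> q) + (norm q)\<^sup>2"
  by (simp add: power2_norm_eq_inner inner_add_left inner_add_right inner_commute)

lemma three_point:
  fixes g :: "'a::euclidean_space \<Rightarrow> real"
  assumes cv: "convex_on UNIV g" and gp: "\<gamma> > 0"
    and mn: "\<And>w. g z + (norm (z - x))\<^sup>2 / (2 * \<gamma>) \<le> g w + (norm (w - x))\<^sup>2 / (2 * \<gamma>)"
  shows "g z + (norm (z - x))\<^sup>2 / (2 * \<gamma>) + (norm (w - z))\<^sup>2 / (2 * \<gamma>) \<le> g w + (norm (w - x))\<^sup>2 / (2 * \<gamma>)"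
proof -
  define a where "a = (z - x) \<bullet> (w - z)"
  define b where "b = (norm (w - z))\<^sup>2"
  have key: "0 \<le> (g w - g z + a / \<gamma>) + t * (b / (2 * \<gamma>))" if t: "0 < t" "t \<le> 1" for t
  proof -
    have e: "(1 - t) *\<^sub>R z + t *\<^sub>R w - x = (z - x) + t *\<^sub>R (w - z)" by (simp add: algebra_simps)
    have n: "(norm ((1 - t) *\<^sub>R z + t *\<^sub>R w - x))\<^sup>2 = (norm (z - x))\<^sup>2 + 2 * t * a + t\<^sup>2 * b"
      unfolding e norm_add_sq by (simp add: a_def b_def power_mult_distrib)
    have cvx: "g ((1 - t) *\<^sub>R z + t *\<^sub>R w) \<le> (1 - t) * g z + t * g w"
      using t by (intro convex_onD[OF cv]) auto
    have "g z + (norm (z - x))\<^sup>2 / (2 * \<gamma>) \<le> g ((1 - t) *\<^sub>R z + t *\<^sub>R w) + (norm ((1 - t) *\<^sub>R z + t *\<^sub>R w - x))\<^sup>2 / (2 * \<gamma>)"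
      by (rule mn)
    with cvx n have "0 \<le> t * (g w - g z) + (2 * t * a + t\<^sup>2 * b) / (2 * \<gamma>)"
      by (simp add: add_divide_distrib algebra_simps)
    also have "\<dots> = t * ((g w - g z + a / \<gamma>) + t * (b / (2 * \<gamma>)))"
      using gp by (simp add: field_simps power2_eq_square)
    finally show ?thesis using t by (simp add: zero_le_mult_iff)
  qed
  have "0 \<le> g w - g z + a / \<gamma>"
    by (rule small_t[OF key]) (use gp in \<open>auto simp: b_def\<close>)
  moreover have "(norm (w - x))\<^sup>2 = (norm (z - x))\<^sup>2 + 2 * a + b"
  proof -
    have "w - x = (z - x) + (w - z)" by simp
    thus ?thesis unfolding a_def b_def by (metis norm_add_sq)
  qed
  ultimately show ?thesis
  proof -
    assume h1: "0 \<le> g w - g z + a / \<gamma>" and h2: "(norm (w - x))\<^sup>2 = (norm (z - x))\<^sup>2 + 2 * a + b"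
    have "g z + (norm (z - x))\<^sup>2 / (2 * \<gamma>) + (norm (w - z))\<^sup>2 / (2 * \<gamma>)
        = g z - a / \<gamma> + (norm (w - x))\<^sup>2 / (2 * \<gamma>)"
      unfolding h2 b_def using gp by (simp add: field_simps)
    also have "\<dots> \<le> g w + (norm (w - x))\<^sup>2 / (2 * \<gamma>)" using h1 by simp
    finally show ?thesis .
  qed
qed

lemma prox_exists:
  fixes g :: "'a::euclidean_space \<Rightarrow> real" and Gr :: "'a \<Rightarrow> 'a"
  assumes cv: "convex_on UNIV g" and d: "\<And>y. (g has_derivative (\<lambda>h. Gr y \<bullet> h)) (at y)"
    and gp: "\<gamma> > 0"
  shows "\<exists>z. \<forall>w. g z + (norm (z - x))\<^sup>2 / (2 * \<gamma>) \<le> g w + (norm (w - x))\<^sup>2 / (2 * \<gamma>)"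
proof -
  define \<Phi> where "\<Phi> w = g w + (norm (w - x))\<^sup>2 / (2 * \<gamma>)" for w
  have cg: "continuous_on UNIV g"
    using d by (intro continuous_at_imp_continuous_on) (auto intro: has_derivative_continuous)
  have cP: "continuous_on UNIV \<Phi>"
    unfolding \<Phi>_def using gp by (intro continuous_intros cg) auto
  define r where "r = 2 * \<gamma> * norm (Gr x) + 1"
  obtain z where z: "z \<in> cball x r" "\<And>y. y \<in> cball x r \<Longrightarrow> \<Phi> z \<le> \<Phi> y"
  proof -
    have r0: "r \<ge> 0" using gp by (simp add: r_def)
    hence "cball x r \<noteq> {}" by simp
    from continuous_attains_inf[OF compact_cball this continuous_on_subset[OF cP]]
    show ?thesis using that by blast
  qed
  have "\<Phi> z \<le> \<Phi> w" for w
  proof (cases "w \<in> cball x r")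
    case True thus ?thesis by (rule z)
  next
    case False
    hence dw: "norm (w - x) > r" by (simp add: dist_norm norm_minus_commute)
    have "g w \<ge> g x + Gr x \<bullet> (w - x)" by (rule grad_ineq[OF cv d])
    moreover have "Gr x \<bullet> (w - x) \<ge> - (norm (Gr x) * norm (w - x))"
      using Cauchy_Schwarz_ineq2[of "Gr x" "w - x"] by (simp add: abs_le_iff)
    moreover have "norm (Gr x) * norm (w - x) < (norm (w - x))\<^sup>2 / (2 * \<gamma>)"
    proof -
      have "2 * \<gamma> * norm (Gr x) < norm (w - x)" using dw by (simp add: r_def)
      hence "2 * \<gamma> * norm (Gr x) * norm (w - x) < norm (w - x) * norm (w - x)"
      proof (rule mult_strict_right_mono)
        have "r > 0" using gp unfolding r_def by (smt (verit) mult_nonneg_nonneg norm_ge_zero)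
        thus "0 < norm (w - x)" using dw by linarith
      qed
      thus ?thesis using gp by (simp add: field_simps power2_eq_square)
    qed
    ultimately have "\<Phi> x < \<Phi> w" by (simp add: \<Phi>_def)
    moreover have "\<Phi> z \<le> \<Phi> x" using z(2)[of x] gp by (simp add: r_def)
    ultimately show ?thesis by simp
  qed
  thus ?thesis unfolding \<Phi>_def by blast
qed

lemma prox_min:
  fixes g :: "'a::euclidean_space \<Rightarrow> real" and Gr :: "'a \<Rightarrow> 'a"
  assumes cv: "convex_on UNIV g" and d: "\<And>y. (g has_derivative (\<lambda>h. Gr y \<bullet> h)) (at y)"
    and gp: "\<gamma> > 0"
  shows "g (prox_step \<gamma> g x) + (norm (prox_step \<gamma> g x - x))\<^sup>2 / (2 * \<gamma>) \<le> g w + (norm (w - x))\<^sup>2 / (2 * \<gamma>)"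
proof -
  obtain z where z: "\<forall>w. g z + (norm (z - x))\<^sup>2 / (2 * \<gamma>) \<le> g w + (norm (w - x))\<^sup>2 / (2 * \<gamma>)"
    using prox_exists[OF cv d gp] by blast
  have "prox_step \<gamma> g x = z"
    unfolding prox_step_def
  proof (rule the_equality)
    show "\<forall>w. g z + (norm (z - x))\<^sup>2 / (2 * \<gamma>) \<le> g w + (norm (w - x))\<^sup>2 / (2 * \<gamma>)" by (rule z)
  next
    fix z' assume z': "\<forall>w. g z' + (norm (z' - x))\<^sup>2 / (2 * \<gamma>) \<le> g w + (norm (w - x))\<^sup>2 / (2 * \<gamma>)"
    have "g z' + (norm (z' - x))\<^sup>2 / (2 * \<gamma>) + (norm (z - z'))\<^sup>2 / (2 * \<gamma>) \<le> g z + (norm (z - x))\<^sup>2 / (2 * \<gamma>)"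
      using z' by (intro three_point[OF cv gp]) auto
    moreover have "g z + (norm (z - x))\<^sup>2 / (2 * \<gamma>) \<le> g z' + (norm (z' - x))\<^sup>2 / (2 * \<gamma>)" using z by auto
    ultimately have "(norm (z - z'))\<^sup>2 / (2 * \<gamma>) \<le> 0" by linarith
    hence "(norm (z - z'))\<^sup>2 \<le> 0" using gp by (simp add: divide_le_0_iff)
    thus "z' = z" by simp
  qed
  thus ?thesis using z by simp
qed

lemma prox_three:
  fixes g :: "'a::euclidean_space \<Rightarrow> real" and Gr :: "'a \<Rightarrow> 'a"
  assumes cv: "convex_on UNIV g" and d: "\<And>y. (g has_derivative (\<lambda>h. Gr y \<bullet> h)) (at y)"
    and gp: "\<gamma> > 0"
  shows "g (prox_step \<gamma> g x) + (norm (prox_step \<gamma> g x - x))\<^sup>2 / (2 * \<gamma>) + (norm (w - prox_step \<gamma> g x))\<^sup>2 / (2 * \<gamma>) \<le> g w + (norm (w - x))\<^sup>2 / (2 * \<gamma>)"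
  by (rule three_point[OF cv gp prox_min[OF cv d gp]])



fun approx :: "('a \<Rightarrow> real) \<Rightarrow> (nat \<Rightarrow> 'a) \<Rightarrow> nat \<Rightarrow> 'a" where
  "approx \<phi> dd 0 = dd 0"
| "approx \<phi> dd (Suc n) = (if \<phi> (dd (Suc n)) < \<phi> (approx \<phi> dd n) then dd (Suc n) else approx \<phi> dd n)"

lemma approx_le: "i \<le> n \<Longrightarrow> \<phi> (approx \<phi> dd n) \<le> \<phi> (dd i)"
proof (induction n)
  case 0 thus ?case by simp
next
  case (Suc n)
  show ?case
  proof (cases "i = Suc n")
    case True thus ?thesis by auto
  next
    case False
    hence "\<phi> (approx \<phi> dd n) \<le> \<phi> (dd i)" using Suc by auto
    thus ?thesis by auto
  qed
qed

lemma dense_seq: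
  obtains dd :: "nat \<Rightarrow> 'a::euclidean_space" where "\<And>X. open X \<Longrightarrow> X \<noteq> {} \<Longrightarrow> \<exists>i. dd i \<in> X"
proof -
  obtain Ds :: "'a set" where Ds: "countable Ds" "\<And>X. open X \<Longrightarrow> X \<noteq> {} \<Longrightarrow> \<exists>d\<in>Ds. d \<in> X"
    using countable_dense_exists by blast
  have ne: "Ds \<noteq> {}" using Ds(2)[of UNIV] by auto
  have "\<exists>i. from_nat_into Ds i \<in> X" if X: "open X" "X \<noteq> {}" for X
  proof -
    obtain d where "d \<in> Ds" "d \<in> X" using Ds(2)[OF X] by blast
    then obtain i where "from_nat_into Ds i = d" using from_nat_into_surj[OF Ds(1)] by blast
    thus ?thesis using \<open>d \<in> X\<close> by blast
  qed
  thus ?thesis by (rule that)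
qed

lemma approx_conv:
  fixes \<phi> :: "'a::euclidean_space \<Rightarrow> real"
  assumes c: "continuous_on UNIV \<phi>"
    and dd: "\<And>X. open X \<Longrightarrow> X \<noteq> {} \<Longrightarrow> \<exists>i. dd i \<in> X"
    and zmin: "\<And>w. \<phi> z + (norm (w - z))\<^sup>2 / (2 * \<gamma>) \<le> \<phi> w"
    and gp: "\<gamma> > 0"
  shows "(\<lambda>n. approx \<phi> dd n) \<longlonglongrightarrow> z"
proof (rule LIMSEQ_I)
  fix r :: real assume r: "r > 0"
  define \<epsilon> where "\<epsilon> = r\<^sup>2 / (2 * \<gamma>)"
  have e: "\<epsilon> > 0" using r gp by (simp add: \<epsilon>_def)
  have "open {w. \<phi> w < \<phi> z + \<epsilon>}"
    using c by (intro open_Collect_less) (auto intro: continuous_intros)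
  moreover have "z \<in> {w. \<phi> w < \<phi> z + \<epsilon>}" using e by simp
  ultimately obtain i where i: "\<phi> (dd i) < \<phi> z + \<epsilon>" using dd by blast
  show "\<exists>no. \<forall>n\<ge>no. norm (approx \<phi> dd n - z) < r"
  proof (intro exI allI impI)
    fix n assume "i \<le> n"
    hence "\<phi> (approx \<phi> dd n) < \<phi> z + \<epsilon>" using approx_le[of i n \<phi> dd] i by linarith
    with zmin[of "approx \<phi> dd n"] have "(norm (approx \<phi> dd n - z))\<^sup>2 / (2 * \<gamma>) < r\<^sup>2 / (2 * \<gamma>)"
      unfolding \<epsilon>_def by linarith
    hence "(norm (approx \<phi> dd n - z))\<^sup>2 < r\<^sup>2" using gp by (simp add: divide_less_cancel)
    thus "norm (approx \<phi> dd n - z) < r" using r by (simp add: power_less_imp_less_base)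
  qed
qed

lemma prox_meas:
  fixes D :: "'b measure" and F' :: "'b \<Rightarrow> 'a::euclidean_space \<Rightarrow> real" and G' :: "'b \<Rightarrow> 'a \<Rightarrow> 'a"
  assumes Fm: "(\<lambda>(\<xi>, x). F' \<xi> x) \<in> borel_measurable (D \<Otimes>\<^sub>M borel)"
    and cv: "\<And>\<xi>. convex_on UNIV (F' \<xi>)"
    and d: "\<And>\<xi> y. (F' \<xi> has_derivative (\<lambda>h. G' \<xi> y \<bullet> h)) (at y)"
    and gp: "\<gamma> > 0"
  shows "(\<lambda>p. prox_step \<gamma> (F' (fst p)) (snd p)) \<in> borel_measurable (D \<Otimes>\<^sub>M borel)"
proof -
  obtain dd :: "nat \<Rightarrow> 'a" where dd: "\<And>X. open X \<Longrightarrow> X \<noteq> {} \<Longrightarrow> \<exists>i. dd i \<in> X"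
    using dense_seq by blast
  define Phi where "Phi p w = F' (fst p) w + (norm (w - snd p))\<^sup>2 / (2 * \<gamma>)" for p :: "'b \<times> 'a" and w
  have Phim: "(\<lambda>p. Phi p (h p)) \<in> borel_measurable (D \<Otimes>\<^sub>M borel)"
    if h[measurable]: "h \<in> borel_measurable (D \<Otimes>\<^sub>M borel)" for h
  proof -
    have "(\<lambda>p. (fst p, h p)) \<in> measurable (D \<Otimes>\<^sub>M borel) (D \<Otimes>\<^sub>M borel)" by measurable
    from measurable_compose[OF this Fm]
    have [measurable]: "(\<lambda>p. F' (fst p) (h p)) \<in> borel_measurable (D \<Otimes>\<^sub>M borel)" by simp
    show ?thesis unfolding Phi_def by measurable
  qed
  have am: "(\<lambda>p. approx (Phi p) dd n) \<in> borel_measurable (D \<Otimes>\<^sub>M borel)" for n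
  proof (induction n)
    case 0 thus ?case by simp
  next
    case (Suc n)
    note [measurable] = Suc Phim[OF Suc] Phim[of "\<lambda>_. dd (Suc n)"]
    show ?case by simp
  qed
  show ?thesis
  proof (rule borel_measurable_LIMSEQ_metric[OF am])
    fix p :: "'b \<times> 'a"
    show "(\<lambda>i. approx (Phi p) dd i) \<longlonglongrightarrow> prox_step \<gamma> (F' (fst p)) (snd p)"
    proof (rule approx_conv[OF _ dd _ gp])
      have "continuous_on UNIV (F' (fst p))"
        using d by (intro continuous_at_imp_continuous_on) (auto intro: has_derivative_continuous)
      thus "continuous_on UNIV (Phi p)" unfolding Phi_def using gp
        by (intro continuous_intros) auto
    next
      fix w
      show "Phi p (prox_step \<gamma> (F' (fst p)) (snd p)) + (norm (w - prox_step \<gamma> (F' (fst p)) (snd p)))\<^sup>2 / (2 * \<gamma>) \<le> Phi p w"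
        unfolding Phi_def using prox_three[OF cv d gp] by blast
    qed
  qed
qed



lemma young_inner:
  fixes e w :: "'a::real_inner" assumes c: "c > 0"
  shows "- 2 * (e \<bullet> w) \<le> (norm e)\<^sup>2 / c + c * (norm w)\<^sup>2"
proof -
  have "0 \<le> (norm (e + c *\<^sub>R w))\<^sup>2" by simp
  also have "\<dots> = (norm e)\<^sup>2 + 2 * c * (e \<bullet> w) + c\<^sup>2 * (norm w)\<^sup>2"
    by (simp add: norm_add_sq power_mult_distrib)
  finally have "- 2 * (e \<bullet> w) * c \<le> (norm e)\<^sup>2 + c\<^sup>2 * (norm w)\<^sup>2" by (simp add: algebra_simps)
  hence "- 2 * (e \<bullet> w) \<le> ((norm e)\<^sup>2 + c\<^sup>2 * (norm w)\<^sup>2) / c"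
    using c by (simp add: pos_le_divide_eq)
  also have "\<dots> = (norm e)\<^sup>2 / c + c * (norm w)\<^sup>2" using c by (simp add: field_simps power2_eq_square)
  finally show ?thesis .
qed

lemma one_step:
  fixes D :: "'b measure" and F' :: "'b \<Rightarrow> 'a::euclidean_space \<Rightarrow> real" and G' :: "'b \<Rightarrow> 'a \<Rightarrow> 'a"
    and \<mu> \<delta> \<gamma> :: real and xs x :: 'a
  assumes D: "prob_space D"
    and Fm: "(\<lambda>(\<xi>, x). F' \<xi> x) \<in> borel_measurable (D \<Otimes>\<^sub>M borel)"
    and F_int: "\<And>x. integrable D (\<lambda>\<xi>. F' \<xi> x)"
    and G_int: "\<And>x. integrable D (\<lambda>\<xi>. G' \<xi> x)"
    and cv: "\<And>\<xi>. convex_on UNIV (F' \<xi>)"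
    and d: "\<And>\<xi> y. (F' \<xi> has_derivative (\<lambda>h. G' \<xi> y \<bullet> h)) (at y)"
    and A3: "\<And>x y. (\<integral>\<xi>. F' \<xi> x \<partial>D) \<ge> (\<integral>\<xi>. F' \<xi> y \<partial>D) + (\<integral>\<xi>. G' \<xi> y \<partial>D) \<bullet> (x - y)
                        + \<mu> / 2 * (norm (x - y))\<^sup>2"
    and A4: "\<And>\<xi>. G' \<xi> xs = 0"
    and SS: "\<And>x. (\<integral>\<^sup>+ \<xi>. ennreal ((norm (G' \<xi> x - (\<integral>\<zeta>. G' \<zeta> x \<partial>D) - G' \<xi> xs))\<^sup>2) \<partial>D)
                   \<le> ennreal (\<delta>\<^sup>2 * (norm (x - xs))\<^sup>2)"
    and \<delta>_pos: "\<delta> > 0" and gp: "\<gamma> > 0" and \<gamma>_le: "\<gamma> \<le> \<mu> / (2 * \<delta>\<^sup>2)"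
  shows "(\<integral>\<^sup>+ \<xi>. ennreal ((norm (prox_step \<gamma> (F' \<xi>) x - xs))\<^sup>2) \<partial>D)
           \<le> ennreal ((norm (x - xs))\<^sup>2 / (1 + \<gamma> * \<mu> / 2))"
proof -
  interpret D: prob_space D by (rule D)
  have mu: "\<mu> > 0"
  proof -
    have "0 < \<mu> / (2 * \<delta>\<^sup>2)" using gp \<gamma>_le by linarith
    thus ?thesis using \<delta>_pos by (simp add: zero_less_divide_iff)
  qed
  define s where "s = \<gamma> * \<mu> / 2"
  have s0: "s > 0" using gp mu by (simp add: s_def)
  define R where "R = (norm (x - xs))\<^sup>2"
  define z where "z \<xi> = prox_step \<gamma> (F' \<xi>) x" for \<xi>
  have zm[measurable]: "z \<in> borel_measurable D"
  proof -
    have "(\<lambda>\<xi>. (\<xi>, x)) \<in> measurable D (D \<Otimes>\<^sub>M borel)" by measurable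
    from measurable_compose[OF this prox_meas[OF Fm cv d gp]] show ?thesis unfolding z_def by simp
  qed
  have Gm[measurable]: "(\<lambda>\<xi>. G' \<xi> y) \<in> borel_measurable D" for y using G_int[of y] by auto
  have Fmx[measurable]: "(\<lambda>\<xi>. F' \<xi> y) \<in> borel_measurable D" for y using F_int[of y] by auto
  have Fxs_min: "F' \<xi> xs \<le> F' \<xi> w" for \<xi> w
    using grad_ineq[OF cv d, of \<xi> xs w] A4 by simp
  have three: "F' \<xi> (z \<xi>) + (norm (z \<xi> - x))\<^sup>2 / (2 * \<gamma>) + (norm (w - z \<xi>))\<^sup>2 / (2 * \<gamma>) \<le> F' \<xi> w + (norm (w - x))\<^sup>2 / (2 * \<gamma>)" for \<xi> w
    unfolding z_def by (rule prox_three[OF cv d gp])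
  have three': "2 * \<gamma> * F' \<xi> (z \<xi>) + (norm (z \<xi> - x))\<^sup>2 + (norm (z \<xi> - xs))\<^sup>2 \<le> 2 * \<gamma> * F' \<xi> xs + R" for \<xi>
  proof -
    have "2 * \<gamma> * (F' \<xi> (z \<xi>) + (norm (z \<xi> - x))\<^sup>2 / (2 * \<gamma>) + (norm (xs - z \<xi>))\<^sup>2 / (2 * \<gamma>)) \<le> 2 * \<gamma> * (F' \<xi> xs + (norm (xs - x))\<^sup>2 / (2 * \<gamma>))"
      using three[of \<xi> xs] gp by (intro mult_left_mono) auto
    thus ?thesis using gp by (simp add: R_def algebra_simps norm_minus_commute)
  qed
  have zb: "norm (z \<xi> - xs) \<le> sqrt R" for \<xi>
  proof -
    have "(norm (z \<xi> - xs))\<^sup>2 \<le> R" using three'[of \<xi>] Fxs_min[of \<xi> "z \<xi>"] gp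
      by (smt (verit, best) mult_left_mono zero_le_power2)
    thus ?thesis by (simp add: real_le_rsqrt)
  qed
  have zint: "integrable D z"
  proof (rule D.integrable_const_bound[where B="norm xs + sqrt R"])
    show "AE \<xi> in D. norm (z \<xi>) \<le> norm xs + sqrt R"
    proof (intro AE_I2)
      fix \<xi> have "norm (z \<xi>) \<le> norm xs + norm (z \<xi> - xs)" by (metis norm_triangle_sub add.commute)
      thus "norm (z \<xi>) \<le> norm xs + sqrt R" using zb[of \<xi>] by linarith
    qed
  qed simp
  define zh where "zh = (\<integral>\<xi>. z \<xi> \<partial>D)"
  define gh where "gh = (\<integral>\<xi>. G' \<xi> zh \<partial>D)"
  define e where "e \<xi> = G' \<xi> zh - gh - G' \<xi> xs" for \<xi>
  define c where "c = 2 * \<delta>\<^sup>2 / \<mu>"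
  have c0: "c > 0" using \<delta>_pos mu by (simp add: c_def)
  have gc: "\<gamma> * c \<le> 1" using \<gamma>_le mu \<delta>_pos by (simp add: c_def field_simps)
  have gc2: "\<gamma> / c = \<gamma> * \<mu> / (2 * \<delta>\<^sup>2)" by (simp add: c_def)
  have pw: "(norm (z \<xi> - xs))\<^sup>2 + (norm (z \<xi> - x))\<^sup>2 - (norm (z \<xi> - zh))\<^sup>2 + 2 * \<gamma> * F' \<xi> zh
            - 2 * \<gamma> * F' \<xi> xs + 2 * \<gamma> * (gh \<bullet> (z \<xi> - zh))
         \<le> R + (\<gamma> / c) * (norm (e \<xi>))\<^sup>2" for \<xi>
  proof -
    have gi: "F' \<xi> (z \<xi>) \<ge> F' \<xi> zh + G' \<xi> zh \<bullet> (z \<xi> - zh)" by (rule grad_ineq[OF cv d])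
    have Ge: "G' \<xi> zh = e \<xi> + gh" using A4 by (simp add: e_def)
    have y: "- 2 * (e \<xi> \<bullet> (z \<xi> - zh)) \<le> (norm (e \<xi>))\<^sup>2 / c + c * (norm (z \<xi> - zh))\<^sup>2"
      by (rule young_inner[OF c0])
    have y2: "- 2 * \<gamma> * (e \<xi> \<bullet> (z \<xi> - zh)) \<le> (\<gamma> / c) * (norm (e \<xi>))\<^sup>2 + (norm (z \<xi> - zh))\<^sup>2"
    proof -
      have "- 2 * \<gamma> * (e \<xi> \<bullet> (z \<xi> - zh)) = \<gamma> * (- 2 * (e \<xi> \<bullet> (z \<xi> - zh)))" by simp
      also have "\<dots> \<le> \<gamma> * ((norm (e \<xi>))\<^sup>2 / c + c * (norm (z \<xi> - zh))\<^sup>2)"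
        using y gp by (intro mult_left_mono) auto
      also have "\<dots> = (\<gamma> / c) * (norm (e \<xi>))\<^sup>2 + (\<gamma> * c) * (norm (z \<xi> - zh))\<^sup>2"
        by (simp add: algebra_simps)
      also have "\<dots> \<le> (\<gamma> / c) * (norm (e \<xi>))\<^sup>2 + (norm (z \<xi> - zh))\<^sup>2"
        using gc gp c0 by (intro add_left_mono mult_left_le_one_le) auto
      finally show ?thesis .
    qed
    have "2 * \<gamma> * F' \<xi> (z \<xi>) \<ge> 2 * \<gamma> * (F' \<xi> zh + (e \<xi> + gh) \<bullet> (z \<xi> - zh))"
      using gi Ge gp by (intro mult_left_mono) auto
    thus ?thesis using three'[of \<xi>] y2 by (simp add: inner_add_left algebra_simps)
  qed
  have zb2: "(norm (z \<xi> - x))\<^sup>2 + (norm (z \<xi> - xs))\<^sup>2 \<le> R" for \<xi>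
    using three'[of \<xi>] Fxs_min[of \<xi> "z \<xi>"] gp by (smt (verit, best) mult_left_mono)
  have isq: "integrable D (\<lambda>\<xi>. (norm (z \<xi> - q))\<^sup>2)" for q
  proof (rule D.integrable_const_bound[where B="(norm xs + sqrt R + norm q)\<^sup>2"])
    show "AE \<xi> in D. norm ((norm (z \<xi> - q))\<^sup>2) \<le> (norm xs + sqrt R + norm q)\<^sup>2"
    proof (intro AE_I2)
      fix \<xi>
      have "norm (z \<xi> - q) \<le> norm (z \<xi>) + norm q" by (rule norm_triangle_ineq4)
      also have "norm (z \<xi>) \<le> norm xs + norm (z \<xi> - xs)" by (metis norm_triangle_sub add.commute)
      finally have "norm (z \<xi> - q) \<le> norm xs + sqrt R + norm q" using zb[of \<xi>] by linarith
      thus "norm ((norm (z \<xi> - q))\<^sup>2) \<le> (norm xs + sqrt R + norm q)\<^sup>2"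
        by (simp add: power_mono)
    qed
  qed simp
  have cent: "(\<integral>\<xi>. (z \<xi> - zh) \<bullet> q \<partial>D) = 0" for q
  proof -
    have "(\<integral>\<xi>. (z \<xi> - zh) \<bullet> q \<partial>D) = (\<integral>\<xi>. (z \<xi> - zh) \<partial>D) \<bullet> q"
      using zint by (intro integral_inner_left) auto
    also have "(\<integral>\<xi>. (z \<xi> - zh) \<partial>D) = 0" using zint by (simp add: zh_def D.prob_space)
    finally show ?thesis by simp
  qed
  define V where "V = (\<integral>\<xi>. (norm (z \<xi> - zh))\<^sup>2 \<partial>D)"
  have decomp: "(\<integral>\<xi>. (norm (z \<xi> - q))\<^sup>2 \<partial>D) = V + (norm (zh - q))\<^sup>2" for q
  proof -
    have "(\<integral>\<xi>. (norm (z \<xi> - q))\<^sup>2 \<partial>D) = (\<integral>\<xi>. (norm (z \<xi> - zh))\<^sup>2 + 2 * ((z \<xi> - zh) \<bullet> (zh - q)) + (norm (zh - q))\<^sup>2 \<partial>D)"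
    proof (rule Bochner_Integration.integral_cong[OF refl])
      fix \<xi> have "z \<xi> - q = (z \<xi> - zh) + (zh - q)" by simp
      thus "(norm (z \<xi> - q))\<^sup>2 = (norm (z \<xi> - zh))\<^sup>2 + 2 * ((z \<xi> - zh) \<bullet> (zh - q)) + (norm (zh - q))\<^sup>2"
        by (metis norm_add_sq)
    qed
    also have "\<dots> = V + 2 * (\<integral>\<xi>. (z \<xi> - zh) \<bullet> (zh - q) \<partial>D) + (norm (zh - q))\<^sup>2"
      using isq zint by (simp add: V_def D.prob_space)
    finally show ?thesis using cent by simp
  qed
  have ie: "integrable D (\<lambda>\<xi>. (norm (e \<xi>))\<^sup>2)"
  proof (subst integrable_iff_bounded, intro conjI)
    show "(\<lambda>\<xi>. (norm (e \<xi>))\<^sup>2) \<in> borel_measurable D" unfolding e_def by measurable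
    have "(\<integral>\<^sup>+\<xi>. ennreal (norm ((norm (e \<xi>))\<^sup>2)) \<partial>D) = (\<integral>\<^sup>+ \<xi>. ennreal ((norm (G' \<xi> zh - (\<integral>\<zeta>. G' \<zeta> zh \<partial>D) - G' \<xi> xs))\<^sup>2) \<partial>D)"
      by (simp add: e_def gh_def)
    also have "\<dots> \<le> ennreal (\<delta>\<^sup>2 * (norm (zh - xs))\<^sup>2)" by (rule SS)
    also have "\<dots> < \<infinity>" by simp
    finally show "(\<integral>\<^sup>+\<xi>. ennreal (norm ((norm (e \<xi>))\<^sup>2)) \<partial>D) < \<infinity>" .
  qed
  have Ee: "(\<integral>\<xi>. (norm (e \<xi>))\<^sup>2 \<partial>D) \<le> \<delta>\<^sup>2 * (norm (zh - xs))\<^sup>2"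
  proof -
    have "ennreal (\<integral>\<xi>. (norm (e \<xi>))\<^sup>2 \<partial>D) = (\<integral>\<^sup>+\<xi>. ennreal ((norm (e \<xi>))\<^sup>2) \<partial>D)"
      using ie by (intro nn_integral_eq_integral[symmetric]) auto
    also have "\<dots> = (\<integral>\<^sup>+ \<xi>. ennreal ((norm (G' \<xi> zh - (\<integral>\<zeta>. G' \<zeta> zh \<partial>D) - G' \<xi> xs))\<^sup>2) \<partial>D)"
      by (simp add: e_def gh_def)
    also have "\<dots> \<le> ennreal (\<delta>\<^sup>2 * (norm (zh - xs))\<^sup>2)" by (rule SS)
    finally show ?thesis by (simp add: ennreal_le_iff)
  qed
  have fgap: "(\<integral>\<xi>. F' \<xi> zh \<partial>D) - (\<integral>\<xi>. F' \<xi> xs \<partial>D) \<ge> \<mu> / 2 * (norm (zh - xs))\<^sup>2"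
    using A3[where x=zh and y=xs] by (simp add: A4)
  have integ: "(\<integral>\<xi>. (norm (z \<xi> - xs))\<^sup>2 + (norm (z \<xi> - x))\<^sup>2 - (norm (z \<xi> - zh))\<^sup>2 + 2 * \<gamma> * F' \<xi> zh
            - 2 * \<gamma> * F' \<xi> xs + 2 * \<gamma> * (gh \<bullet> (z \<xi> - zh)) \<partial>D)
         \<le> (\<integral>\<xi>. R + (\<gamma> / c) * (norm (e \<xi>))\<^sup>2 \<partial>D)"
  proof (rule integral_mono)
    have izc: "integrable D (\<lambda>\<xi>. z \<xi> - zh)" using zint by auto
    show "integrable D (\<lambda>\<xi>. (norm (z \<xi> - xs))\<^sup>2 + (norm (z \<xi> - x))\<^sup>2 - (norm (z \<xi> - zh))\<^sup>2 + 2 * \<gamma> * F' \<xi> zh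
            - 2 * \<gamma> * F' \<xi> xs + 2 * \<gamma> * (gh \<bullet> (z \<xi> - zh)))"
      by (intro Bochner_Integration.integrable_add Bochner_Integration.integrable_diff integrable_mult_right isq F_int integrable_inner_right izc)
    show "integrable D (\<lambda>\<xi>. R + (\<gamma> / c) * (norm (e \<xi>))\<^sup>2)"
      by (intro Bochner_Integration.integrable_add integrable_mult_right ie D.integrable_const)
  qed (rule pw)
  have lhs: "(\<integral>\<xi>. (norm (z \<xi> - xs))\<^sup>2 + (norm (z \<xi> - x))\<^sup>2 - (norm (z \<xi> - zh))\<^sup>2 + 2 * \<gamma> * F' \<xi> zh
            - 2 * \<gamma> * F' \<xi> xs + 2 * \<gamma> * (gh \<bullet> (z \<xi> - zh)) \<partial>D)
      = (\<integral>\<xi>. (norm (z \<xi> - xs))\<^sup>2 \<partial>D) + (\<integral>\<xi>. (norm (z \<xi> - x))\<^sup>2 \<partial>D) - V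
        + 2 * \<gamma> * (\<integral>\<xi>. F' \<xi> zh \<partial>D) - 2 * \<gamma> * (\<integral>\<xi>. F' \<xi> xs \<partial>D) + 2 * \<gamma> * (\<integral>\<xi>. gh \<bullet> (z \<xi> - zh) \<partial>D)"
    unfolding V_def
  proof (rule has_bochner_integral_integral_eq)
    have izc: "integrable D (\<lambda>\<xi>. z \<xi> - zh)" using zint by auto
    have iin: "integrable D (\<lambda>\<xi>. gh \<bullet> (z \<xi> - zh))" by (intro integrable_inner_right izc)
    show "has_bochner_integral D (\<lambda>\<xi>. (norm (z \<xi> - xs))\<^sup>2 + (norm (z \<xi> - x))\<^sup>2 - (norm (z \<xi> - zh))\<^sup>2 + 2 * \<gamma> * F' \<xi> zh
            - 2 * \<gamma> * F' \<xi> xs + 2 * \<gamma> * (gh \<bullet> (z \<xi> - zh)))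
      ((\<integral>\<xi>. (norm (z \<xi> - xs))\<^sup>2 \<partial>D) + (\<integral>\<xi>. (norm (z \<xi> - x))\<^sup>2 \<partial>D) - (\<integral>\<xi>. (norm (z \<xi> - zh))\<^sup>2 \<partial>D)
        + 2 * \<gamma> * (\<integral>\<xi>. F' \<xi> zh \<partial>D) - 2 * \<gamma> * (\<integral>\<xi>. F' \<xi> xs \<partial>D) + 2 * \<gamma> * (\<integral>\<xi>. gh \<bullet> (z \<xi> - zh) \<partial>D))"
      by (intro has_bochner_integral_add has_bochner_integral_diff has_bochner_integral_mult_right
          has_bochner_integral_integrable isq F_int iin)
  qed
  have gcent: "(\<integral>\<xi>. gh \<bullet> (z \<xi> - zh) \<partial>D) = 0"
    using cent[of gh] by (simp add: inner_commute)
  have rhs: "(\<integral>\<xi>. R + (\<gamma> / c) * (norm (e \<xi>))\<^sup>2 \<partial>D) = R + (\<gamma> / c) * (\<integral>\<xi>. (norm (e \<xi>))\<^sup>2 \<partial>D)"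
    using ie by (simp add: D.prob_space)
  define A where "A = (norm (zh - xs))\<^sup>2"
  define U where "U = (norm (zh - x))\<^sup>2"
  define Y where "Y = (\<integral>\<xi>. (norm (z \<xi> - xs))\<^sup>2 \<partial>D)"
  have Y: "Y = V + A" unfolding Y_def A_def by (rule decomp)
  have W: "(\<integral>\<xi>. (norm (z \<xi> - x))\<^sup>2 \<partial>D) = V + U" unfolding U_def by (rule decomp)
  have gcE: "(\<gamma> / c) * (\<integral>\<xi>. (norm (e \<xi>))\<^sup>2 \<partial>D) \<le> (\<gamma> / c) * (\<delta>\<^sup>2 * A)"
    using Ee gp c0 unfolding A_def by (intro mult_left_mono) auto
  have gcA: "(\<gamma> / c) * (\<delta>\<^sup>2 * A) = s * A" using \<delta>_pos mu by (simp add: c_def s_def field_simps)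
  have main1: "(1 + s) * A + U + V \<le> R"
  proof -
    have "V + A + (V + U) - V + 2 * \<gamma> * (\<mu> / 2 * A) \<le> R + s * A"
    proof -
      have "2 * \<gamma> * (\<mu> / 2 * A) \<le> 2 * \<gamma> * ((\<integral>\<xi>. F' \<xi> zh \<partial>D) - (\<integral>\<xi>. F' \<xi> xs \<partial>D))"
        using fgap gp unfolding A_def by (intro mult_left_mono) auto
      moreover have "2 * \<gamma> * ((\<integral>\<xi>. F' \<xi> zh \<partial>D) - (\<integral>\<xi>. F' \<xi> xs \<partial>D)) = 2 * \<gamma> * (\<integral>\<xi>. F' \<xi> zh \<partial>D) - 2 * \<gamma> * (\<integral>\<xi>. F' \<xi> xs \<partial>D)"
        by (simp add: algebra_simps)
      moreover have "(\<integral>\<xi>. (norm (z \<xi> - xs))\<^sup>2 \<partial>D) + (\<integral>\<xi>. (norm (z \<xi> - x))\<^sup>2 \<partial>D) - V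
        + 2 * \<gamma> * (\<integral>\<xi>. F' \<xi> zh \<partial>D) - 2 * \<gamma> * (\<integral>\<xi>. F' \<xi> xs \<partial>D) \<le> R + s * A"
        using integ lhs gcent rhs gcE gcA by simp
      ultimately show ?thesis using Y W unfolding Y_def by linarith
    qed
    thus ?thesis by (simp add: s_def algebra_simps)
  qed
  have Rb: "R \<le> (1 + 1 / s) * U + (1 + s) * A"
  proof -
    have "x - xs = (x - zh) + (zh - xs)" by simp
    hence R: "R = (norm (x - zh))\<^sup>2 + 2 * ((x - zh) \<bullet> (zh - xs)) + A"
      unfolding R_def A_def by (metis norm_add_sq)
    have nU: "(norm (x - zh))\<^sup>2 = U" unfolding U_def by (simp add: norm_minus_commute)
    have y0: "- 2 * ((zh - x) \<bullet> (zh - xs)) \<le> (norm (zh - x))\<^sup>2 / s + s * (norm (zh - xs))\<^sup>2"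
      by (rule young_inner[OF s0])
    have neg: "(zh - x) \<bullet> (zh - xs) = - ((x - zh) \<bullet> (zh - xs))" by (simp add: inner_diff_left)
    have y: "2 * ((x - zh) \<bullet> (zh - xs)) \<le> U / s + s * A"
      using y0 unfolding neg U_def[symmetric] A_def[symmetric] by simp
    have "(1 + 1 / s) * U + (1 + s) * A = U + U / s + A + s * A" by (simp add: algebra_simps)
    thus ?thesis using R y nU by linarith
  qed
  have "(1 + s) * Y \<le> R"
  proof -
    have "s * R \<le> (1 + s) * U + s * (1 + s) * A"
    proof -
      have "s * R \<le> s * ((1 + 1 / s) * U + (1 + s) * A)" using Rb s0 by (intro mult_left_mono) auto
      also have "\<dots> = (1 + s) * U + s * (1 + s) * A" using s0 by (simp add: field_simps)
      finally show ?thesis .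
    qed
    moreover have "(1 + s) * ((1 + s) * A + U + V) \<le> (1 + s) * R"
      using main1 s0 by (intro mult_left_mono) auto
    ultimately show ?thesis unfolding Y by (simp add: algebra_simps)
  qed
  hence Yb: "Y \<le> R / (1 + s)" using s0 by (simp add: field_simps)
  have "(\<integral>\<^sup>+ \<xi>. ennreal ((norm (prox_step \<gamma> (F' \<xi>) x - xs))\<^sup>2) \<partial>D) = ennreal Y"
    unfolding Y_def z_def[symmetric] using isq by (intro nn_integral_eq_integral) auto
  also have "\<dots> \<le> ennreal (R / (1 + s))" using Yb by (rule ennreal_leI)
  finally show ?thesis by (simp add: R_def s_def)
qed



lemma sppm_shift:
  "sppm \<gamma> H x0 \<omega> (Suc k) = sppm \<gamma> H (prox_step \<gamma> (H (\<omega> 0)) x0) (\<lambda>n. \<omega> (Suc n)) k"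
  by (induction k) auto

lemma nn_integral_seq_split:
  fixes D :: "'b measure"
  assumes D: "prob_space D"
    and f[measurable]: "f \<in> borel_measurable (PiM UNIV (\<lambda>_::nat. D))"
  shows "(\<integral>\<^sup>+\<omega>. f \<omega> \<partial>PiM UNIV (\<lambda>_. D)) = (\<integral>\<^sup>+\<xi>. (\<integral>\<^sup>+\<omega>. f (case_nat \<xi> \<omega>) \<partial>PiM UNIV (\<lambda>_. D)) \<partial>D)"
proof -
  interpret D: prob_space D by (rule D)
  interpret S: sequence_space D ..
  interpret P: pair_sigma_finite D "\<Pi>\<^sub>M i::nat\<in>UNIV. D" ..
  have "(\<integral>\<^sup>+\<omega>. f \<omega> \<partial>PiM UNIV (\<lambda>_. D)) = (\<integral>\<^sup>+X. f ((\<lambda>(s, \<omega>). case_nat s \<omega>) X) \<partial>(D \<Otimes>\<^sub>M S.S))"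
    by (subst S.PiM_iter[symmetric]) (simp add: nn_integral_distr)
  also have "\<dots> = (\<integral>\<^sup>+x. \<integral>\<^sup>+X. f ((\<lambda>(s, \<omega>). case_nat s \<omega>) (x, X)) \<partial>S.S \<partial>D)"
  proof -
    have m: "(\<lambda>X. f (case_nat (fst X) (snd X))) \<in> borel_measurable (D \<Otimes>\<^sub>M S.S)" by measurable
    show ?thesis using S.nn_integral_fst[OF m] by (simp add: split_beta')
  qed
  finally show ?thesis by simp
qed

lemma rate_le:
  fixes s :: real assumes "s > 0"
  shows "1 / (1 + s) \<le> 1 - min (s / 2) (1 / 2)"
proof (cases "s \<le> 1")
  case True
  have "1 \<le> (1 - s / 2) * (1 + s)" using True assms by (simp add: algebra_simps power2_eq_square)
  thus ?thesis using True assms by (simp add: min_def field_simps)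
next
  case False
  thus ?thesis by (simp add: min_def field_simps)
qed



theorem theorem6p1:
  fixes D :: "'b measure"
    and F :: "'b \<Rightarrow> 'a::euclidean_space \<Rightarrow> real"
    and G :: "'b \<Rightarrow> 'a \<Rightarrow> 'a"
    and \<mu> \<delta> \<gamma> :: real and xs x0 :: 'a
  assumes D: "prob_space D"
    and F_meas: "(\<lambda>(\<xi>, x). F \<xi> x) \<in> borel_measurable (D \<Otimes>\<^sub>M borel)"
    and F_int: "\<And>x. integrable D (\<lambda>\<xi>. F \<xi> x)"
    and G_int: "\<And>x. integrable D (\<lambda>\<xi>. G \<xi> x)"
    and A1: "AE \<xi> in D. \<forall>x. (F \<xi> has_derivative (\<lambda>h. G \<xi> x \<bullet> h)) (at x)"
    and f_grad: "\<And>x. ((\<lambda>y. \<integral>\<xi>. F \<xi> y \<partial>D) has_derivative (\<lambda>h. (\<integral>\<xi>. G \<xi> x \<partial>D) \<bullet> h)) (at x)"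
    and A2: "AE \<xi> in D. convex_on UNIV (F \<xi>)"
    and A3: "\<And>x y. (\<integral>\<xi>. F \<xi> x \<partial>D) \<ge> (\<integral>\<xi>. F \<xi> y \<partial>D) + (\<integral>\<xi>. G \<xi> y \<partial>D) \<bullet> (x - y)
                        + \<mu> / 2 * (norm (x - y))\<^sup>2"
    and xs_min: "\<And>x. (\<integral>\<xi>. F \<xi> xs \<partial>D) \<le> (\<integral>\<xi>. F \<xi> x \<partial>D)"
    and A4: "AE \<xi> in D. G \<xi> xs = 0"
    and \<delta>_pos: "\<delta> > 0"
    and SS: "\<And>x. (\<integral>\<^sup>+ \<xi>. ennreal ((norm (G \<xi> x - (\<integral>\<zeta>. G \<zeta> x \<partial>D) - G \<xi> xs))\<^sup>2) \<partial>D)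
                   \<le> ennreal (\<delta>\<^sup>2 * (norm (x - xs))\<^sup>2)"
    and \<gamma>_pos: "\<gamma> > 0"
    and \<gamma>_le: "\<gamma> \<le> \<mu> / (2 * \<delta>\<^sup>2)"
  shows "\<forall>k. (\<integral>\<^sup>+ \<omega>. ennreal ((norm (sppm \<gamma> F x0 \<omega> k - xs))\<^sup>2) \<partial>(PiM UNIV (\<lambda>_. D)))
             \<le> ennreal ((1 - min (\<gamma> * \<mu> / 4) (1 / 2)) ^ k * (norm (x0 - xs))\<^sup>2)"
proof
  fix k :: nat
  interpret D: prob_space D by (rule D)
  interpret S: sequence_space D ..
  have mu: "\<mu> > 0"
  proof -
    have "0 < \<mu> / (2 * \<delta>\<^sup>2)" using \<gamma>_pos \<gamma>_le by linarith
    thus ?thesis using \<delta>_pos by (simp add: zero_less_divide_iff)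
  qed
  have AE3: "AE \<xi> in D. (\<forall>x. (F \<xi> has_derivative (\<lambda>h. G \<xi> x \<bullet> h)) (at x)) \<and> convex_on UNIV (F \<xi>) \<and> G \<xi> xs = 0"
    using A1 A2 A4 by eventually_elim auto
  then obtain N where N: "{\<xi> \<in> space D. \<not> ((\<forall>x. (F \<xi> has_derivative (\<lambda>h. G \<xi> x \<bullet> h)) (at x)) \<and> convex_on UNIV (F \<xi>) \<and> G \<xi> xs = 0)} \<subseteq> N"
    "emeasure D N = 0" "N \<in> sets D" by (rule AE_E)
  define Good where "Good = space D - N"
  have Good_sets[measurable]: "Good \<in> sets D" using N(3) by (simp add: Good_def)
  have Good_prop: "(\<forall>x. (F \<xi> has_derivative (\<lambda>h. G \<xi> x \<bullet> h)) (at x)) \<and> convex_on UNIV (F \<xi>) \<and> G \<xi> xs = 0"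
    if "\<xi> \<in> Good" for \<xi> using N(1) that by (auto simp: Good_def)
  have AE_Good: "AE \<xi> in D. \<xi> \<in> Good"
  proof -
    have "AE \<xi> in D. \<xi> \<notin> N" using N(2,3) by (intro AE_not_in) auto
    with AE_space[of D] show ?thesis by eventually_elim (auto simp: Good_def)
  qed
  define F' where "F' \<xi> = (if \<xi> \<in> Good then F \<xi> else (\<lambda>_. 0))" for \<xi>
  define G' where "G' \<xi> = (if \<xi> \<in> Good then G \<xi> else (\<lambda>_. 0))" for \<xi>
  have Fm': "(\<lambda>(\<xi>, x). F' \<xi> x) \<in> borel_measurable (D \<Otimes>\<^sub>M borel)"
  proof -
    have [measurable]: "(\<lambda>p. F (fst p) (snd p)) \<in> borel_measurable (D \<Otimes>\<^sub>M borel)"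
      using F_meas by (simp add: split_beta')
    have "(\<lambda>p. if fst p \<in> Good then F (fst p) (snd p) else 0) \<in> borel_measurable (D \<Otimes>\<^sub>M borel)"
      by measurable
    moreover have "(\<lambda>(\<xi>, x). F' \<xi> x) = (\<lambda>p. if fst p \<in> Good then F (fst p) (snd p) else 0)"
      by (auto simp: F'_def fun_eq_iff)
    ultimately show ?thesis by simp
  qed
  have Fm1: "(\<lambda>\<xi>. F \<xi> x) \<in> borel_measurable D" for x using F_int[of x] by auto
  have Gm1: "(\<lambda>\<xi>. G \<xi> x) \<in> borel_measurable D" for x using G_int[of x] by auto
  have Fm1': "(\<lambda>\<xi>. F' \<xi> x) \<in> borel_measurable D" for x
  proof -
    note [measurable] = Fm1[of x]
    have "(\<lambda>\<xi>. if \<xi> \<in> Good then F \<xi> x else 0) \<in> borel_measurable D" by measurable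
    moreover have "(\<lambda>\<xi>. F' \<xi> x) = (\<lambda>\<xi>. if \<xi> \<in> Good then F \<xi> x else 0)"
      by (auto simp: F'_def fun_eq_iff)
    ultimately show ?thesis by simp
  qed
  have Gm1': "(\<lambda>\<xi>. G' \<xi> x) \<in> borel_measurable D" for x
  proof -
    note [measurable] = Gm1[of x]
    have "(\<lambda>\<xi>. if \<xi> \<in> Good then G \<xi> x else 0) \<in> borel_measurable D" by measurable
    moreover have "(\<lambda>\<xi>. G' \<xi> x) = (\<lambda>\<xi>. if \<xi> \<in> Good then G \<xi> x else 0)"
      by (auto simp: G'_def fun_eq_iff)
    ultimately show ?thesis by simp
  qed
  have aeF: "AE \<xi> in D. F \<xi> x = F' \<xi> x" for x using AE_Good by eventually_elim (simp add: F'_def)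
  have aeG: "AE \<xi> in D. G \<xi> x = G' \<xi> x" for x using AE_Good by eventually_elim (simp add: G'_def)
  have F_int': "integrable D (\<lambda>\<xi>. F' \<xi> x)" for x
    by (rule integrable_cong_AE_imp[OF F_int Fm1' aeF])
  have G_int': "integrable D (\<lambda>\<xi>. G' \<xi> x)" for x
    by (rule integrable_cong_AE_imp[OF G_int Gm1' aeG])
  have intF: "(\<integral>\<xi>. F' \<xi> x \<partial>D) = (\<integral>\<xi>. F \<xi> x \<partial>D)" for x
    using aeF[of x] by (intro integral_cong_AE[OF Fm1' Fm1]) (auto elim: eventually_mono)
  have intG: "(\<integral>\<xi>. G' \<xi> x \<partial>D) = (\<integral>\<xi>. G \<xi> x \<partial>D)" for x
    using aeG[of x] by (intro integral_cong_AE[OF Gm1' Gm1]) (auto elim: eventually_mono)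
  have cv': "convex_on UNIV (F' \<xi>)" for \<xi>
    using Good_prop[of \<xi>] by (auto simp: F'_def convex_on_const)
  have d': "(F' \<xi> has_derivative (\<lambda>h. G' \<xi> y \<bullet> h)) (at y)" for \<xi> y
    using Good_prop[of \<xi>] by (auto simp: F'_def G'_def)
  have A3': "(\<integral>\<xi>. F' \<xi> x \<partial>D) \<ge> (\<integral>\<xi>. F' \<xi> y \<partial>D) + (\<integral>\<xi>. G' \<xi> y \<partial>D) \<bullet> (x - y)
                        + \<mu> / 2 * (norm (x - y))\<^sup>2" for x y
    unfolding intF intG by (rule A3)
  have A4': "G' \<xi> xs = 0" for \<xi> using Good_prop[of \<xi>] by (auto simp: G'_def)
  have SS': "(\<integral>\<^sup>+ \<xi>. ennreal ((norm (G' \<xi> x - (\<integral>\<zeta>. G' \<zeta> x \<partial>D) - G' \<xi> xs))\<^sup>2) \<partial>D)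
                   \<le> ennreal (\<delta>\<^sup>2 * (norm (x - xs))\<^sup>2)" for x
  proof -
    have "(\<integral>\<^sup>+ \<xi>. ennreal ((norm (G' \<xi> x - (\<integral>\<zeta>. G' \<zeta> x \<partial>D) - G' \<xi> xs))\<^sup>2) \<partial>D)
        = (\<integral>\<^sup>+ \<xi>. ennreal ((norm (G \<xi> x - (\<integral>\<zeta>. G \<zeta> x \<partial>D) - G \<xi> xs))\<^sup>2) \<partial>D)"
      unfolding intG using AE_Good by (intro nn_integral_cong_AE) (auto simp: G'_def elim: eventually_mono)
    thus ?thesis using SS[of x] by simp
  qed
  define P where "P \<xi> x = prox_step \<gamma> (F' \<xi>) x" for \<xi> x
  have Pm[measurable]: "(\<lambda>p. P (fst p) (snd p)) \<in> borel_measurable (D \<Otimes>\<^sub>M borel)"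
    unfolding P_def by (rule prox_meas[OF Fm' cv' d' \<gamma>_pos])
  have step: "(\<integral>\<^sup>+ \<xi>. ennreal ((norm (P \<xi> x - xs))\<^sup>2) \<partial>D)
           \<le> ennreal ((norm (x - xs))\<^sup>2 / (1 + \<gamma> * \<mu> / 2))" for x
    unfolding P_def by (rule one_step[OF D Fm' F_int' G_int' cv' d' A3' A4' SS' \<delta>_pos \<gamma>_pos \<gamma>_le])
  define \<rho> where "\<rho> = 1 / (1 + \<gamma> * \<mu> / 2)"
  have \<rho>0: "0 \<le> \<rho>" using \<gamma>_pos mu by (simp add: \<rho>_def)
  have sppm_meas: "(\<lambda>\<omega>. sppm \<gamma> F' x \<omega> n) \<in> borel_measurable S.S" for n x
  proof (induction n)
    case 0 thus ?case by simp
  next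
    case (Suc n)
    have "(\<lambda>\<omega>. (\<omega> n, sppm \<gamma> F' x \<omega> n)) \<in> measurable S.S (D \<Otimes>\<^sub>M borel)"
      using Suc by measurable
    from measurable_compose[OF this Pm] show ?case by (simp add: P_def)
  qed
  have main: "(\<integral>\<^sup>+ \<omega>. ennreal ((norm (sppm \<gamma> F' x \<omega> n - xs))\<^sup>2) \<partial>S.S) \<le> ennreal (\<rho> ^ n * (norm (x - xs))\<^sup>2)" for n x
  proof (induction n arbitrary: x)
    case 0
    show ?case by (simp add: S.emeasure_space_1)
  next
    case (Suc n)
    have m: "(\<lambda>\<omega>. ennreal ((norm (sppm \<gamma> F' x \<omega> (Suc n) - xs))\<^sup>2)) \<in> borel_measurable S.S"
      using sppm_meas[of x "Suc n"] by measurable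
    have "(\<integral>\<^sup>+ \<omega>. ennreal ((norm (sppm \<gamma> F' x \<omega> (Suc n) - xs))\<^sup>2) \<partial>S.S)
        = (\<integral>\<^sup>+\<xi>. (\<integral>\<^sup>+\<omega>. ennreal ((norm (sppm \<gamma> F' x (case_nat \<xi> \<omega>) (Suc n) - xs))\<^sup>2) \<partial>S.S) \<partial>D)"
      by (rule nn_integral_seq_split[OF D m])
    also have "\<dots> = (\<integral>\<^sup>+\<xi>. (\<integral>\<^sup>+\<omega>. ennreal ((norm (sppm \<gamma> F' (P \<xi> x) \<omega> n - xs))\<^sup>2) \<partial>S.S) \<partial>D)"
      by (simp only: sppm_shift) (simp add: P_def)
    also have "\<dots> \<le> (\<integral>\<^sup>+\<xi>. ennreal (\<rho> ^ n) * ennreal ((norm (P \<xi> x - xs))\<^sup>2) \<partial>D)"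
      by (intro nn_integral_mono) (simp add: Suc.IH ennreal_mult[symmetric] \<rho>0)
    also have "\<dots> = ennreal (\<rho> ^ n) * (\<integral>\<^sup>+\<xi>. ennreal ((norm (P \<xi> x - xs))\<^sup>2) \<partial>D)"
    proof (rule nn_integral_cmult)
      have "(\<lambda>\<xi>. P \<xi> x) \<in> borel_measurable D"
      proof -
        have "(\<lambda>\<xi>. (\<xi>, x)) \<in> measurable D (D \<Otimes>\<^sub>M borel)" by measurable
        from measurable_compose[OF this Pm] show ?thesis by simp
      qed
      thus "(\<lambda>\<xi>. ennreal ((norm (P \<xi> x - xs))\<^sup>2)) \<in> borel_measurable D" by measurable
    qed
    also have "\<dots> \<le> ennreal (\<rho> ^ n) * ennreal ((norm (x - xs))\<^sup>2 / (1 + \<gamma> * \<mu> / 2))"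
      by (intro mult_left_mono step) simp
    also have "\<dots> = ennreal (\<rho> ^ Suc n * (norm (x - xs))\<^sup>2)"
      using \<rho>0 by (simp add: ennreal_mult[symmetric] \<rho>_def field_simps)
    finally show ?case .
  qed
  have AEgood: "AE \<omega> in S.S. \<forall>i. \<omega> i \<in> Good"
    unfolding AE_all_countable by (intro allI S.AE_component AE_Good) simp
  have eq: "sppm \<gamma> F x0 \<omega> n = sppm \<gamma> F' x0 \<omega> n" if "\<forall>i. \<omega> i \<in> Good" for \<omega> n
    using that by (induction n) (auto simp: F'_def)
  have "(\<integral>\<^sup>+ \<omega>. ennreal ((norm (sppm \<gamma> F x0 \<omega> k - xs))\<^sup>2) \<partial>S.S)
      = (\<integral>\<^sup>+ \<omega>. ennreal ((norm (sppm \<gamma> F' x0 \<omega> k - xs))\<^sup>2) \<partial>S.S)"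
    using AEgood by (intro nn_integral_cong_AE) (auto elim!: eventually_mono simp: eq)
  also have "\<dots> \<le> ennreal (\<rho> ^ k * (norm (x0 - xs))\<^sup>2)" by (rule main)
  also have "\<dots> \<le> ennreal ((1 - min (\<gamma> * \<mu> / 4) (1 / 2)) ^ k * (norm (x0 - xs))\<^sup>2)"
  proof (intro ennreal_leI mult_right_mono power_mono \<rho>0)
    have "\<rho> \<le> 1 - min ((\<gamma> * \<mu> / 2) / 2) (1 / 2)"
      unfolding \<rho>_def using \<gamma>_pos mu by (intro rate_le) simp
    thus "\<rho> \<le> 1 - min (\<gamma> * \<mu> / 4) (1 / 2)" by simp
  qed simp
  finally show "(\<integral>\<^sup>+ \<omega>. ennreal ((norm (sppm \<gamma> F x0 \<omega> k - xs))\<^sup>2) \<partial>(PiM UNIV (\<lambda>_. D)))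
             \<le> ennreal ((1 - min (\<gamma> * \<mu> / 4) (1 / 2)) ^ k * (norm (x0 - xs))\<^sup>2)" .
qed


end
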